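(* Let $G$ be a connected graph with a system of $h$ pairwise non-overlapping paths between two vertices $v_i$ and $v_j$. Then $\{v_i,v_j\}$ is a pair of order $h$ in $G$.
   Context: Graphs are finite, may have multiple edges, no loops. A path is a sequence $u_0,e_1,u_1,\dots,e_\ell,u_\ell$ of vertices and edges with $e_k$ joining $u_{k-1}$ and $u_k$ and the edges pairwise distinct; its length is $\ell$. Two paths do not overlap if they have no common edge. A system of $h$ paths between $v_i$ and $v_j$ is a set of $h$ distinct paths $\mathcal{P}_1,\dots,\mathcal{P}_h$ from $v_i$ to $v_j$, all of the same length $\ell$, such that, numbering the edges of each path $1,\dots,\ell$ consecutively starting at $v_i$, for each $k=1,\dots,\ell$ the graph obtained from $G$ by removing all edges numbered $k$ (in any of the paths) is disconnected. With $c_{ij}$ ($i\neq j$) the number of edges joining $v_i,v_j$, $c_{ii}=-\sum_{j\ne i}c_{ij}$, $M(G)=(c_{ij})$: a pair $\{v_i,v_j\}$ has order $h>0$ if there is $S\in\mathbb{Z}^n$ with $M(G)S=h(e_i-e_j)$ and $\gcd(s_1-s_n,\dots,s_{n-1}-s_n)=1$; equivalently, the class of $e_i-e_j$ in $\mathbb{Z}^n/\mathrm{Im}(M(G))$ has order exactly $h$. *)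

theory Defs
  imports Main
begin

text \<open>Multigraph on vertex set {0..<n} (vertex v_{k+1} of the paper is k here),
  edge identifiers of type 'e, edge set E, endpoint map ends (no loops).\<close>

definition multigraph :: "nat \<Rightarrow> 'e set \<Rightarrow> ('e \<Rightarrow> nat set) \<Rightarrow> bool" where
  "multigraph n E ends \<longleftrightarrow> finite E \<and>
     (\<forall>e\<in>E. \<exists>a b. a \<noteq> b \<and> a < n \<and> b < n \<and> ends e = {a, b})"

definition conn :: "nat \<Rightarrow> 'e set \<Rightarrow> ('e \<Rightarrow> nat set) \<Rightarrow> bool" where
  "conn n F ends \<longleftrightarrow>
     (\<forall>a<n. \<forall>b<n. (a, b) \<in> {(x, y). \<exists>e\<in>F. ends e = {x, y}}\<^sup>*)"

definition is_path :: "'e set \<Rightarrow> ('e \<Rightarrow> nat set) \<Rightarrow> nat list \<times> 'e list \<Rightarrow> bool" where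
  "is_path E ends p \<longleftrightarrow> (let us = fst p; es = snd p in
     length us = Suc (length es) \<and> distinct es \<and> set es \<subseteq> E \<and>
     (\<forall>k<length es. ends (es ! k) = {us ! k, us ! Suc k}))"

definition path_from_to :: "'e set \<Rightarrow> ('e \<Rightarrow> nat set) \<Rightarrow> nat \<Rightarrow> nat \<Rightarrow> nat list \<times> 'e list \<Rightarrow> bool" where
  "path_from_to E ends a b p \<longleftrightarrow> is_path E ends p \<and> hd (fst p) = a \<and> last (fst p) = b"

text \<open>A system of h paths between a and b: a set of h distinct paths from a to b, all of
  the same length l, such that for each k = 1..l removing all edges numbered k
  (edge number k of a path is snd p ! (k-1)) disconnects the graph.\<close>
definition path_system :: "nat \<Rightarrow> 'e set \<Rightarrow> ('e \<Rightarrow> nat set) \<Rightarrow> nat \<Rightarrow> nat \<Rightarrow> nat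
     \<Rightarrow> (nat list \<times> 'e list) set \<Rightarrow> bool" where
  "path_system n E ends a b h P \<longleftrightarrow> finite P \<and> card P = h \<and>
     (\<forall>p\<in>P. path_from_to E ends a b p) \<and>
     (\<exists>l. (\<forall>p\<in>P. length (snd p) = l) \<and>
          (\<forall>k\<in>{1..l}. \<not> conn n (E - (\<lambda>p. snd p ! (k - 1)) ` P) ends))"

definition non_overlapping :: "(nat list \<times> 'e list) set \<Rightarrow> bool" where
  "non_overlapping P \<longleftrightarrow> (\<forall>p\<in>P. \<forall>q\<in>P. p \<noteq> q \<longrightarrow> set (snd p) \<inter> set (snd q) = {})"

definition cmat :: "nat \<Rightarrow> 'e set \<Rightarrow> ('e \<Rightarrow> nat set) \<Rightarrow> nat \<Rightarrow> nat \<Rightarrow> int" where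
  "cmat n E ends r c = (if r \<noteq> c then int (card {e\<in>E. ends e = {r, c}})
      else - (\<Sum>d\<in>{..<n} - {r}. int (card {e\<in>E. ends e = {r, d}})))"

text \<open>The pair {v_i, v_j} has order h > 0: there is S in Z^n with M(G) S = h (e_i - e_j)
  and gcd(s_1 - s_n, ..., s_{n-1} - s_n) = 1 (0-indexed here).\<close>
definition pair_order :: "nat \<Rightarrow> 'e set \<Rightarrow> ('e \<Rightarrow> nat set) \<Rightarrow> nat \<Rightarrow> nat \<Rightarrow> nat \<Rightarrow> bool" where
  "pair_order n E ends i j h \<longleftrightarrow> h > 0 \<and>
     (\<exists>S :: nat \<Rightarrow> int.
        (\<forall>r<n. (\<Sum>c<n. cmat n E ends r c * S c) =
                 int h * ((if r = i then 1 else 0) - (if r = j then 1 else 0))) \<and>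
        Gcd ((\<lambda>k. S k - S (n - 1)) ` {..<n - 1}) = 1)"

end

theory Submission
  imports Defs
begin

definition relE :: "('e \<Rightarrow> nat set) \<Rightarrow> 'e set \<Rightarrow> (nat \<times> nat) set" where
  "relE ends F = {(x, y). \<exists>e\<in>F. ends e = {x, y}}"

lemma relE_sym: "(x, y) \<in> (relE ends F)\<^sup>* \<Longrightarrow> (y, x) \<in> (relE ends F)\<^sup>*"
proof -
  have c: "(relE ends F)\<inverse> = relE ends F" by (auto simp: relE_def insert_commute)
  assume "(x, y) \<in> (relE ends F)\<^sup>*"
  then have "(y, x) \<in> ((relE ends F)\<inverse>)\<^sup>*" by (simp add: rtrancl_converseI)
  then show ?thesis using c by simp
qed

lemma tele: "(\<Sum>k\<in>{1..(m::nat)}. (g (k - 1) - g k :: int)) = g 0 - g m"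
  by (induction m) (auto simp: sum.cl_ivl_Suc)

lemma Mform:
  assumes mg: "multigraph n E ends" and r: "r < n"
  shows "(\<Sum>c<n. cmat n E ends r c * f c) =
         (\<Sum>e\<in>{e\<in>E. r \<in> ends e}. (\<Sum>x\<in>ends e. f x) - 2 * f r)"
proof -
  let ?N = "\<lambda>c. int (card {e\<in>E. ends e = {r, c}})"
  let ?T = "{..<n} - {r}"
  have finE: "finite E" using mg by (simp add: multigraph_def)
  have "(\<Sum>c<n. cmat n E ends r c * f c) = cmat n E ends r r * f r + (\<Sum>c\<in>?T. cmat n E ends r c * f c)"
    using r by (simp add: sum.remove)
  also have "\<dots> = (\<Sum>c\<in>?T. ?N c * (f c - f r))"
    by (simp add: cmat_def sum_distrib_right right_diff_distrib sum_subtractf)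
  finally have L: "(\<Sum>c<n. cmat n E ends r c * f c) = (\<Sum>c\<in>?T. ?N c * (f c - f r))" .
  define E' where "E' = {e\<in>E. r \<in> ends e}"
  define g where "g e = (SOME c. c \<noteq> r \<and> c < n \<and> ends e = {r, c})" for e
  have gp: "g e \<noteq> r \<and> g e < n \<and> ends e = {r, g e}" if "e \<in> E'" for e
  proof -
    from that mg obtain a b where ab: "a \<noteq> b" "a < n" "b < n" "ends e = {a, b}" "r \<in> ends e"
      unfolding E'_def multigraph_def by blast
    then have "\<exists>c. c \<noteq> r \<and> c < n \<and> ends e = {r, c}" by (auto simp: insert_commute)
    then show ?thesis unfolding g_def by (rule someI_ex)
  qed
  have grp: "{e\<in>E'. g e = c} = {e\<in>E. ends e = {r, c}}" if "c \<in> ?T" for c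
  proof
    show "{e\<in>E'. g e = c} \<subseteq> {e\<in>E. ends e = {r, c}}" using gp by (auto simp: E'_def)
    show "{e\<in>E. ends e = {r, c}} \<subseteq> {e\<in>E'. g e = c}"
    proof
      fix e assume e: "e \<in> {e\<in>E. ends e = {r, c}}"
      then have "e \<in> E'" by (auto simp: E'_def)
      from gp[OF this] e that show "e \<in> {e\<in>E'. g e = c}" by (auto simp: doubleton_eq_iff \<open>e \<in> E'\<close>)
    qed
  qed
  have "(\<Sum>e\<in>E'. (\<Sum>x\<in>ends e. f x) - 2 * f r) = (\<Sum>c\<in>?T. \<Sum>e\<in>{e\<in>E'. g e = c}. (\<Sum>x\<in>ends e. f x) - 2 * f r)"
    by (rule sum.group[symmetric]) (use finE gp in \<open>auto simp: E'_def\<close>)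
  also have "\<dots> = (\<Sum>c\<in>?T. ?N c * (f c - f r))"
  proof (rule sum.cong[OF refl])
    fix c assume c: "c \<in> ?T"
    have "(\<Sum>e\<in>{e\<in>E'. g e = c}. (\<Sum>x\<in>ends e. f x) - 2 * f r) = (\<Sum>e\<in>{e\<in>E. ends e = {r, c}}. f c - f r)"
      unfolding grp[OF c] using c by (intro sum.cong) auto
    then show "(\<Sum>e\<in>{e\<in>E'. g e = c}. (\<Sum>x\<in>ends e. f x) - 2 * f r) = ?N c * (f c - f r)" by simp
  qed
  finally show ?thesis using L by (simp add: E'_def)
qed

locale PS =
  fixes n :: nat and E :: "'e set" and ends :: "'e \<Rightarrow> nat set" and i j :: nat
    and P :: "(nat list \<times> 'e list) set" and l :: nat
  assumes mg: "multigraph n E ends" and cn: "conn n E ends"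
    and ij: "i \<noteq> j" and iN: "i < n"
    and fin: "finite P" and ne: "P \<noteq> {}"
    and pth: "\<forall>p\<in>P. path_from_to E ends i j p"
    and len: "\<forall>p\<in>P. length (snd p) = l"
    and cut: "\<forall>k\<in>{1..l}. \<not> conn n (E - (\<lambda>p. snd p ! (k - 1)) ` P) ends"
    and no: "non_overlapping P"
begin

definition C where "C k = (\<lambda>p. snd p ! (k - 1)) ` P"
definition A where "A k = {v. (i, v) \<in> (relE ends (E - C k))\<^sup>*}"
definition chi :: "nat \<Rightarrow> nat \<Rightarrow> int" where "chi k v = (if v \<in> A k then 0 else 1)"
definition S :: "nat \<Rightarrow> int" where "S v = (\<Sum>k\<in>{1..l}. chi k v)"

lemma pf:
  assumes "p \<in> P"
  shows "length (fst p) = Suc l" "distinct (snd p)" "set (snd p) \<subseteq> E"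
    "\<And>t. t < l \<Longrightarrow> ends (snd p ! t) = {fst p ! t, fst p ! Suc t}"
    "fst p ! 0 = i" "fst p ! l = j"
proof -
  have P: "path_from_to E ends i j p" using pth assms by blast
  have L: "length (snd p) = l" using len assms by blast
  show l1: "length (fst p) = Suc l" using P L by (simp add: path_from_to_def is_path_def Let_def)
  show "distinct (snd p)" "set (snd p) \<subseteq> E"
    "\<And>t. t < l \<Longrightarrow> ends (snd p ! t) = {fst p ! t, fst p ! Suc t}"
    using P L by (auto simp: path_from_to_def is_path_def Let_def)
  have ne: "fst p \<noteq> []" using l1 by auto
  show "fst p ! 0 = i" using P ne by (simp add: path_from_to_def hd_conv_nth)
  show "fst p ! l = j" using P ne l1 by (simp add: path_from_to_def last_conv_nth)
qed

lemma l_pos: "l > 0"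
proof -
  obtain p where "p \<in> P" using ne by blast
  with pf[OF this] ij show ?thesis by (cases l) auto
qed

lemma edge_C:
  assumes p: "p \<in> P" and t: "t < l" and k: "k \<in> {1..l}"
  shows "(snd p ! t \<in> C k) = (t = k - 1)"
proof
  assume "snd p ! t \<in> C k"
  then obtain q where q: "q \<in> P" "snd p ! t = snd q ! (k - 1)" by (auto simp: C_def)
  have lp: "length (snd p) = l" "length (snd q) = l" using len p q by auto
  show "t = k - 1"
  proof (cases "q = p")
    case True
    then show ?thesis using nth_eq_iff_index_eq[OF pf(2)[OF p], of t "k - 1"] q lp t k by auto
  next
    case False
    have m1: "snd p ! t \<in> set (snd p)" using lp t by simp
    have "k - 1 < length (snd q)" using lp k by auto
    then have m2: "snd q ! (k - 1) \<in> set (snd q)" by (rule nth_mem)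
    have "set (snd q) \<inter> set (snd p) = {}" using no False p q unfolding non_overlapping_def by blast
    then show ?thesis using m1 m2 q(2) by auto
  qed
next
  assume "t = k - 1" then show "snd p ! t \<in> C k" using p by (auto simp: C_def)
qed

lemma walk:
  assumes p: "p \<in> P" and ab: "a \<le> b" "b \<le> l"
    and F: "\<And>t. a \<le> t \<Longrightarrow> t < b \<Longrightarrow> snd p ! t \<notin> F"
  shows "(fst p ! a, fst p ! b) \<in> (relE ends (E - F))\<^sup>*"
  using ab F
proof (induction b)
  case 0 then show ?case by simp
next
  case (Suc b)
  show ?case
  proof (cases "a = Suc b")
    case True then show ?thesis by simp
  next
    case False
    then have ab': "a \<le> b" using Suc by simp
    have IH: "(fst p ! a, fst p ! b) \<in> (relE ends (E - F))\<^sup>*" using Suc ab' by simp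
    have bl: "b < l" using Suc by simp
    have "snd p ! b \<in> E" using pf(3)[OF p] len p bl by auto
    moreover have "snd p ! b \<notin> F" using Suc ab' by simp
    ultimately have "(fst p ! b, fst p ! Suc b) \<in> relE ends (E - F)"
      using pf(4)[OF p bl] by (auto simp: relE_def)
    with IH show ?thesis by (rule rtrancl_into_rtrancl)
  qed
qed

lemma prefix:
  assumes p: "p \<in> P" and k: "k \<in> {1..l}" and t: "t \<le> k - 1"
  shows "fst p ! t \<in> A k"
proof -
  have "(fst p ! 0, fst p ! t) \<in> (relE ends (E - C k))\<^sup>*"
    by (rule walk[OF p]) (use t k edge_C[OF p _ k] in auto)
  then show ?thesis using pf(5)[OF p] by (simp add: A_def)
qed

lemma suffix:
  assumes p: "p \<in> P" and k: "k \<in> {1..l}" and t: "k \<le> t" "t \<le> l"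
  shows "(fst p ! t, j) \<in> (relE ends (E - C k))\<^sup>*"
proof -
  have "(fst p ! t, fst p ! l) \<in> (relE ends (E - C k))\<^sup>*"
    by (rule walk[OF p]) (use t k edge_C[OF p _ k] in auto)
  then show ?thesis using pf(6)[OF p] by simp
qed

lemma j_notin:
  assumes k: "k \<in> {1..l}"
  shows "j \<notin> A k"
proof
  assume jA: "j \<in> A k"
  let ?R = "relE ends (E - C k)"
  have CE: "C k \<subseteq> E" using pf(3) len k by (force simp: C_def)
  have reach: "(i, v) \<in> ?R\<^sup>*" if "(i, v) \<in> (relE ends E)\<^sup>*" for v
    using that
  proof (induction rule: rtrancl_induct)
    case base then show ?case by simp
  next
    case (step v w)
    then obtain e where e: "e \<in> E" "ends e = {v, w}" by (auto simp: relE_def)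
    show ?case
    proof (cases "e \<in> C k")
      case False
      then have "(v, w) \<in> ?R" using e by (auto simp: relE_def)
      then show ?thesis using step.IH by (meson rtrancl_into_rtrancl)
    next
      case True
      then obtain p where p: "p \<in> P" "e = snd p ! (k - 1)" by (auto simp: C_def)
      have kl: "k - 1 < l" using k by auto
      have e2: "ends e = {fst p ! (k - 1), fst p ! k}" using pf(4)[OF p(1) kl] p k by simp
      have a1: "(i, fst p ! (k - 1)) \<in> ?R\<^sup>*" using prefix[OF p(1) k] by (simp add: A_def)
      have "(fst p ! k, j) \<in> ?R\<^sup>*" using suffix[OF p(1) k] k by simp
      then have "(j, fst p ! k) \<in> ?R\<^sup>*" by (rule relE_sym)
      then have a2: "(i, fst p ! k) \<in> ?R\<^sup>*" using jA by (simp add: A_def)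
      have "w \<in> {fst p ! (k - 1), fst p ! k}" using e e2 by auto
      then show ?thesis using a1 a2 by auto
    qed
  qed
  have "conn n (E - C k) ends"
    unfolding conn_def
  proof (intro allI impI)
    fix a b assume "a < n" "b < n"
    then have "(i, a) \<in> (relE ends E)\<^sup>*" "(i, b) \<in> (relE ends E)\<^sup>*"
      using cn iN unfolding conn_def relE_def by blast+
    then have "(i, a) \<in> ?R\<^sup>*" "(i, b) \<in> ?R\<^sup>*" using reach by auto
    then have "(a, b) \<in> ?R\<^sup>*" using relE_sym by (meson rtrancl_trans)
    then show "(a, b) \<in> {(x, y). \<exists>e\<in>E - C k. ends e = {x, y}}\<^sup>*" by (simp add: relE_def)
  qed
  then show False using cut k by (simp add: C_def)
qed

lemma suffix_out:
  assumes p: "p \<in> P" and k: "k \<in> {1..l}" and t: "k \<le> t" "t \<le> l"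
  shows "fst p ! t \<notin> A k"
  using suffix[OF assms] j_notin[OF k] by (auto simp: A_def intro: rtrancl_trans)

lemma chi_path:
  assumes p: "p \<in> P" and k: "k \<in> {1..l}" and t: "t \<le> l"
  shows "chi k (fst p ! t) = (if t < k then 0 else 1)"
  using prefix[OF p k, of t] suffix_out[OF p k, of t] t k by (auto simp: chi_def)

lemma S_path:
  assumes p: "p \<in> P" and t: "t \<le> l"
  shows "S (fst p ! t) = int t"
proof -
  have "S (fst p ! t) = (\<Sum>k\<in>{1..l}. if k \<le> t then 1 else 0)"
    unfolding S_def by (rule sum.cong) (auto simp: chi_path[OF p _ t])
  also have "\<dots> = (\<Sum>k\<in>{1..t}. 1)"
    by (rule sum.mono_neutral_cong_right) (use t in auto)
  finally show ?thesis by simp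
qed

lemma S_range: "0 \<le> S v \<and> S v \<le> int l"
proof -
  have "S v \<le> (\<Sum>k\<in>{1..l}. 1)" unfolding S_def by (rule sum_mono) (simp add: chi_def)
  moreover have "0 \<le> S v" unfolding S_def by (rule sum_nonneg) (simp add: chi_def)
  ultimately show ?thesis by simp
qed

lemma vert_lt:
  assumes p: "p \<in> P" and t: "t \<le> l"
  shows "fst p ! t < n"
proof -
  have ends_lt: "x < n" if "e \<in> E" "x \<in> ends e" for e x
    using mg that unfolding multigraph_def by force
  have lp: "l > 0" by (rule l_pos)
  show ?thesis
  proof (cases "t < l")
    case True
    then have "snd p ! t \<in> E" using pf(3)[OF p] len p by auto
    then show ?thesis using ends_lt pf(4)[OF p True] by auto
  next
    case False
    then have tl: "t = l" using t by simp
    have l1: "l - 1 < l" using lp by simp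
    then have "snd p ! (l - 1) \<in> E" using pf(3)[OF p] len p by auto
    moreover have "fst p ! t \<in> ends (snd p ! (l - 1))" using pf(4)[OF p l1] tl lp by simp
    ultimately show ?thesis using ends_lt by blast
  qed
qed

lemma per_k:
  assumes k: "k \<in> {1..l}"
  shows "(\<Sum>e\<in>{e\<in>E. r \<in> ends e}. (\<Sum>x\<in>ends e. chi k x) - 2 * chi k r) =
    (\<Sum>p\<in>P. (if r = fst p ! (k - 1) then 1 else 0) - (if r = fst p ! k then 1 else 0))"
proof -
  define F where "F e = (if r \<in> ends e then (\<Sum>x\<in>ends e. chi k x) - 2 * chi k r else 0)" for e
  have finE: "finite E" using mg by (simp add: multigraph_def)
  have CE: "C k \<subseteq> E" using pf(3) len k by (force simp: C_def)
  have "(\<Sum>e\<in>{e\<in>E. r \<in> ends e}. (\<Sum>x\<in>ends e. chi k x) - 2 * chi k r) = (\<Sum>e\<in>E. F e)"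
    unfolding F_def using finE by (simp add: sum.inter_filter)
  also have "\<dots> = (\<Sum>e\<in>C k. F e)"
  proof (rule sum.mono_neutral_right[OF finE CE], intro ballI)
    fix e assume e: "e \<in> E - C k"
    then obtain a b where ab: "a \<noteq> b" "ends e = {a, b}" using mg unfolding multigraph_def by blast
    have "(a, b) \<in> relE ends (E - C k)" using e ab by (auto simp: relE_def)
    then have ab1: "(a, b) \<in> (relE ends (E - C k))\<^sup>*" by blast
    then have ab2: "(b, a) \<in> (relE ends (E - C k))\<^sup>*" by (rule relE_sym)
    have "(a \<in> A k) = (b \<in> A k)" using ab1 ab2 by (auto simp: A_def intro: rtrancl_trans)
    then have "chi k a = chi k b" by (simp add: chi_def)
    then show "F e = 0" using ab by (auto simp: F_def)
  qed
  also have "\<dots> = (\<Sum>p\<in>P. F (snd p ! (k - 1)))"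
    unfolding C_def
  proof (rule sum.reindex_cong[OF _ refl refl])
    show "inj_on (\<lambda>p. snd p ! (k - 1)) P"
    proof (rule inj_onI, rule ccontr)
      fix p q assume pq: "p \<in> P" "q \<in> P" "snd p ! (k - 1) = snd q ! (k - 1)" "p \<noteq> q"
      have "k - 1 < length (snd q)" "k - 1 < length (snd p)" using len pq k by auto
      then have "snd q ! (k - 1) \<in> set (snd q)" "snd p ! (k - 1) \<in> set (snd p)" by auto
      moreover have "set (snd p) \<inter> set (snd q) = {}" using no pq unfolding non_overlapping_def by blast
      ultimately show False using pq(3) by auto
    qed
  qed
  also have "\<dots> = (\<Sum>p\<in>P. (if r = fst p ! (k - 1) then 1 else 0) - (if r = fst p ! k then 1 else 0))"
  proof (rule sum.cong[OF refl])
    fix p assume p: "p \<in> P"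
    have kl: "k - 1 < l" using k by auto
    have en: "ends (snd p ! (k - 1)) = {fst p ! (k - 1), fst p ! k}" using pf(4)[OF p kl] k by simp
    have c0: "chi k (fst p ! (k - 1)) = 0" using chi_path[OF p k, of "k - 1"] k by auto
    have c1: "chi k (fst p ! k) = 1" using chi_path[OF p k, of k] k by auto
    have ne: "fst p ! (k - 1) \<noteq> fst p ! k" using c0 c1 by auto
    show "F (snd p ! (k - 1)) = (if r = fst p ! (k - 1) then 1 else 0) - (if r = fst p ! k then 1 else 0)"
      unfolding F_def en using c0 c1 ne by auto
  qed
  finally show ?thesis .
qed

lemma main:
  assumes r: "r < n"
  shows "(\<Sum>c<n. cmat n E ends r c * S c) = int (card P) * ((if r = i then 1 else 0) - (if r = j then 1 else 0))"
proof -
  define E' where "E' = {e\<in>E. r \<in> ends e}"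
  have finE: "finite E" using mg by (simp add: multigraph_def)
  have fe: "finite (ends e)" if "e \<in> E" for e using mg that unfolding multigraph_def by force
  have "(\<Sum>c<n. cmat n E ends r c * S c) = (\<Sum>e\<in>E'. (\<Sum>x\<in>ends e. S x) - 2 * S r)"
    unfolding E'_def by (rule Mform[OF mg r])
  also have "\<dots> = (\<Sum>e\<in>E'. \<Sum>k\<in>{1..l}. (\<Sum>x\<in>ends e. chi k x) - 2 * chi k r)"
  proof (rule sum.cong[OF refl])
    fix e assume "e \<in> E'"
    show "(\<Sum>x\<in>ends e. S x) - 2 * S r = (\<Sum>k\<in>{1..l}. (\<Sum>x\<in>ends e. chi k x) - 2 * chi k r)"
      unfolding S_def by (simp add: sum_subtractf sum_distrib_left sum.swap[of _ "ends e"])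
  qed
  also have "\<dots> = (\<Sum>k\<in>{1..l}. \<Sum>e\<in>E'. (\<Sum>x\<in>ends e. chi k x) - 2 * chi k r)"
    by (rule sum.swap)
  also have "\<dots> = (\<Sum>k\<in>{1..l}. \<Sum>p\<in>P. (if r = fst p ! (k - 1) then 1 else 0) - (if r = fst p ! k then 1 else 0))"
    unfolding E'_def by (rule sum.cong[OF refl]) (rule per_k)
  also have "\<dots> = (\<Sum>p\<in>P. \<Sum>k\<in>{1..l}. (if r = fst p ! (k - 1) then 1 else 0) - (if r = fst p ! k then 1 else 0))"
    by (rule sum.swap)
  also have "\<dots> = (\<Sum>p\<in>P. (if r = i then 1 else 0) - (if r = j then 1 else 0))"
  proof (rule sum.cong[OF refl])
    fix p assume p: "p \<in> P"
    have "(\<Sum>k\<in>{1..l}. (if r = fst p ! (k - 1) then 1 else 0) - (if r = fst p ! k then 1 else 0)) =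
      (if r = fst p ! 0 then 1 else 0) - (if r = fst p ! l then (1::int) else 0)"
      by (rule tele[where g = "\<lambda>k. if r = fst p ! k then 1 else 0"])
    then show "(\<Sum>k\<in>{1..l}. (if r = fst p ! (k - 1) then 1 else 0) - (if r = fst p ! k then 1 else 0)) =
      (if r = i then 1 else 0) - (if r = j then (1::int) else 0)" using pf(5,6)[OF p] by simp
  qed
  also have "\<dots> = int (card P) * ((if r = i then 1 else 0) - (if r = j then 1 else 0))" by simp
  finally show ?thesis .
qed

lemma gcd1: "Gcd ((\<lambda>k. S k - S (n - 1)) ` {..<n - 1}) = 1"
proof -
  obtain p where p: "p \<in> P" using ne by blast
  define c where "c = S (n - 1)"
  have cr: "0 \<le> c" "c \<le> int l" using S_range c_def by auto
  have lp: "l > 0" by (rule l_pos)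
  define t where "t = (if c < int l then nat c + 1 else nat c - 1)"
  have t: "t \<le> l" using cr lp by (auto simp: t_def)
  have St: "S (fst p ! t) = int t" by (rule S_path[OF p t])
  have d: "S (fst p ! t) - c = 1 \<or> S (fst p ! t) - c = -1" using St cr lp by (auto simp: t_def)
  then have nv: "fst p ! t \<noteq> n - 1" using c_def by auto
  have "fst p ! t < n" by (rule vert_lt[OF p t])
  then have mem: "fst p ! t \<in> {..<n - 1}" using nv by auto
  have "Gcd ((\<lambda>k. S k - S (n - 1)) ` {..<n - 1}) dvd (S (fst p ! t) - c)"
    using mem c_def by (intro Gcd_dvd) auto
  then have "is_unit (Gcd ((\<lambda>k. S k - S (n - 1)) ` {..<n - 1}))" using d by auto
  then have "normalize (Gcd ((\<lambda>k. S k - S (n - 1)) ` {..<n - 1})) = 1" by (rule is_unit_normalize)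
  then show ?thesis by simp
qed

end

theorem lemma2p2:
  fixes n :: nat and E :: "'e set" and ends :: "'e \<Rightarrow> nat set"
    and i j h :: nat and P :: "(nat list \<times> 'e list) set"
  assumes "multigraph n E ends"
    and "conn n E ends"
    and "i < n" and "j < n" and "i \<noteq> j"
    and "h > 0"
    and "path_system n E ends i j h P"
    and "non_overlapping P"
  shows "pair_order n E ends i j h"
proof -
  from assms(7) obtain l where fin: "finite P" and cP: "card P = h"
    and pth: "\<forall>p\<in>P. path_from_to E ends i j p"
    and len: "\<forall>p\<in>P. length (snd p) = l"
    and cut: "\<forall>k\<in>{1..l}. \<not> conn n (E - (\<lambda>p. snd p ! (k - 1)) ` P) ends"
    unfolding path_system_def by blast
  have ne: "P \<noteq> {}" using cP assms(6) by auto
  interpret PS n E ends i j P l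
    using assms fin ne pth len cut by unfold_locales auto
  show ?thesis
    unfolding pair_order_def
  proof (intro conjI exI[of _ S])
    show "h > 0" by (rule assms(6))
    show "\<forall>r<n. (\<Sum>c<n. cmat n E ends r c * S c) =
                 int h * ((if r = i then 1 else 0) - (if r = j then 1 else 0))"
      using main cP by blast
    show "Gcd ((\<lambda>k. S k - S (n - 1)) ` {..<n - 1}) = 1" by (rule gcd1)
  qed
qed

end
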